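(* Let $F$ be a field of characteristic $2$ and let $q=\langle a_1,\dots,a_n\rangle$ be a totally singular quadratic form over $F$ with not all $a_i=0$. Let $L/F$ be a finite field extension, $a\in F$, $\lambda\in L\setminus F$ and $K=F(\lambda)$. (i) If $L/F$ is separable and $a\in D_L(q_L)$, then $a\in D_F(q)$. (ii) If $a\in F^*$ and $a\lambda\in D_K(q_K)$, then $K/F$ is separable. (iii) If $a\in F^*$ and $a\lambda\in D_L(q_L)$, then $K/F$ is separable or $L/K$ is inseparable.
   Context: $\langle a_1,\dots,a_n\rangle$ denotes the quadratic form $a_1x_1^2+\dots+a_nx_n^2$. For a quadratic form $q$ on $V$ over a field $E$, $D_E(q)=\{q(x):x\in V\setminus\{0\}\}$, and $q_E$ denotes scalar extension. *)

theory Defs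
  imports "HOL-Computational_Algebra.Polynomial"
begin

text \<open>All fields are subfields of an ambient field of type 'a.\<close>

definition is_subfield :: "'a::field set \<Rightarrow> bool" where
  "is_subfield E \<longleftrightarrow> 0 \<in> E \<and> 1 \<in> E \<and>
     (\<forall>x\<in>E. \<forall>y\<in>E. x + y \<in> E \<and> x - y \<in> E \<and> x * y \<in> E) \<and>
     (\<forall>x\<in>E. x \<noteq> 0 \<longrightarrow> inverse x \<in> E)"

definition finite_ext :: "'a::field set \<Rightarrow> 'a set \<Rightarrow> bool" where
  "finite_ext E F \<longleftrightarrow> is_subfield F \<and> is_subfield E \<and> F \<subseteq> E \<and>
     (\<exists>B. finite B \<and> B \<subseteq> E \<and>
        (\<forall>x\<in>E. \<exists>c. (\<forall>b\<in>B. c b \<in> F) \<and> x = (\<Sum>b\<in>B. c b * b)))"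

definition adjoin :: "'a::field set \<Rightarrow> 'a \<Rightarrow> 'a set" where
  "adjoin F x = \<Inter>{E. is_subfield E \<and> F \<subseteq> E \<and> x \<in> E}"

definition poly_over :: "'a::field set \<Rightarrow> 'a poly \<Rightarrow> bool" where
  "poly_over F p \<longleftrightarrow> (\<forall>i. coeff p i \<in> F)"

definition is_min_poly :: "'a::field set \<Rightarrow> 'a \<Rightarrow> 'a poly \<Rightarrow> bool" where
  "is_min_poly F x p \<longleftrightarrow> poly_over F p \<and> lead_coeff p = 1 \<and> poly p x = 0 \<and>
     (\<forall>q. poly_over F q \<and> q \<noteq> 0 \<and> poly q x = 0 \<longrightarrow> degree p \<le> degree q)"

definition separable_poly :: "'a::field poly \<Rightarrow> bool" where
  "separable_poly p \<longleftrightarrow> coprime p (pderiv p)"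

definition separable_elem :: "'a::field set \<Rightarrow> 'a \<Rightarrow> bool" where
  "separable_elem F x \<longleftrightarrow> (\<exists>p. is_min_poly F x p \<and> separable_poly p)"

definition separable_ext :: "'a::field set \<Rightarrow> 'a set \<Rightarrow> bool" where
  "separable_ext E F \<longleftrightarrow> (\<forall>x\<in>E. separable_elem F x)"

text \<open>Values D_E(q_E) of the totally singular form q = <a_0,...,a_{n-1}>
  (a_0 x_0^2 + ... + a_{n-1} x_{n-1}^2) over E, on nonzero vectors of E^n.\<close>
definition D_ts :: "'a::field set \<Rightarrow> nat \<Rightarrow> (nat \<Rightarrow> 'a) \<Rightarrow> 'a set" where
  "D_ts E n a = {(\<Sum>i<n. a i * (x i)^2) | x. (\<forall>i<n. x i \<in> E) \<and> (\<exists>i<n. x i \<noteq> 0)}"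

end

theory Submission
  imports Defs "HOL-Algebra.Embedded_Algebras"
begin


definition TR :: "'a::field ring" where
  "TR = \<lparr>carrier = UNIV, monoid.mult = (\<lambda>x y. x * y), one = 1, ring.zero = 0, add = (\<lambda>x y. x + y)\<rparr>"

lemma TR_simps [simp]:
  "carrier TR = UNIV" "mult TR = (\<lambda>x y. x * y)" "one TR = 1" "zero TR = 0" "add TR = (\<lambda>x y. x + y)"
  by (auto simp: TR_def)

lemma field_TR: "field (TR :: 'a::field ring)"
proof -
  have "\<exists>y. x + y = 0" for x :: 'a
    using add.right_inverse by blast
  moreover have "x \<noteq> 0 \<Longrightarrow> \<exists>y. x * y = 1" for x :: 'a
    by (rule exI[of _ "inverse x"]) auto
  ultimately show ?thesis
    unfolding TR_def using add.right_inverse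
    by unfold_locales (auto simp:algebra_simps Units_def)
qed

interpretation R: field "TR :: 'a::field ring"
  by (rule field_TR)

lemma TR_ainv [simp]: "a_inv TR x = - (x::'a::field)"
  by (rule R.minus_equality) (auto)

lemma TR_minus [simp]: "a_minus TR x y = x - (y::'a::field)"
  by (simp add: a_minus_def)

lemma TR_minv [simp]: "x \<noteq> 0 \<Longrightarrow> m_inv TR x = inverse (x::'a::field)"
  by (rule R.inv_char) (auto)



lemma is_subfield_subfield: "is_subfield E \<Longrightarrow> subfield E (TR::'a::field ring)"
  apply (rule R.subfieldI')
  apply (rule R.subringI)
  apply (auto simp: is_subfield_def)
  done


lemma combine_sum: "length Ks = length Us \<Longrightarrow>
   R.combine Ks Us = (\<Sum>j<length Us. Ks!j * (Us!j :: 'a::field))"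
proof (induction Us arbitrary: Ks)
  case Nil then show ?case by (cases Ks) auto
next
  case (Cons u Us)
  then obtain k Ks' where "Ks = k # Ks'" by (cases Ks) auto
  with Cons show ?case by (simp del: sum.lessThan_Suc add: sum.lessThan_Suc_shift)
qed

lemma Span_sum: assumes K: "subfield K (TR::'a::field ring)" shows "x \<in> R.Span K Us \<longleftrightarrow>
   (\<exists>f. (\<forall>j<length Us. f j \<in> K) \<and> x = (\<Sum>j<length Us. f j * (Us!j :: 'a::field)))"
proof
  assume "x \<in> R.Span K Us"
  then obtain Ks where Ks: "set Ks \<subseteq> K" "length Ks = length Us" "x = R.combine Ks Us"
    using R.Span_mem_iff_length_version[OF K, of Us x] by auto
  show "\<exists>f. (\<forall>j<length Us. f j \<in> K) \<and> x = (\<Sum>j<length Us. f j * Us!j)"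
    apply (rule exI[of _ "\<lambda>j. Ks!j"])
    using Ks combine_sum[OF Ks(2)] by (auto simp: nth_mem subsetD)
next
  assume "\<exists>f. (\<forall>j<length Us. f j \<in> K) \<and> x = (\<Sum>j<length Us. f j * Us!j)"
  then obtain f where f: "\<forall>j<length Us. f j \<in> K" "x = (\<Sum>j<length Us. f j * Us!j)" by auto
  define Ks where "Ks = map f [0..<length Us]"
  have "length Ks = length Us" "set Ks \<subseteq> K" using f by (auto simp: Ks_def)
  moreover have "x = R.combine Ks Us" using combine_sum[of Ks Us] f by (simp add: Ks_def)
  ultimately show "x \<in> R.Span K Us"
    using R.Span_mem_iff_length_version[OF K, of Us x] by auto
qed



hide_const (open) up_ring.coeff up_ring.monom module.smult

lemma sf_0: "is_subfield E \<Longrightarrow> 0 \<in> E" and sf_1: "is_subfield E \<Longrightarrow> 1 \<in> E"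
  by (auto simp: is_subfield_def)

lemma sf_add: "is_subfield E \<Longrightarrow> x \<in> E \<Longrightarrow> y \<in> E \<Longrightarrow> x + y \<in> E"
  and sf_diff: "is_subfield E \<Longrightarrow> x \<in> E \<Longrightarrow> y \<in> E \<Longrightarrow> x - y \<in> E"
  and sf_mult: "is_subfield E \<Longrightarrow> x \<in> E \<Longrightarrow> y \<in> E \<Longrightarrow> x * y \<in> E"
  by (auto simp: is_subfield_def)

lemma sf_uminus: "is_subfield E \<Longrightarrow> x \<in> E \<Longrightarrow> - x \<in> E"
  using sf_diff[of E 0 x] sf_0 by auto

lemma sf_inverse: "is_subfield E \<Longrightarrow> x \<in> E \<Longrightarrow> inverse x \<in> E"
  by (cases "x = 0") (auto simp: is_subfield_def)

lemma sf_divide: "is_subfield E \<Longrightarrow> x \<in> E \<Longrightarrow> y \<in> E \<Longrightarrow> x / y \<in> E"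
  by (simp add: divide_inverse sf_mult sf_inverse)

lemma sf_power: "is_subfield E \<Longrightarrow> x \<in> E \<Longrightarrow> x ^ n \<in> E"
  by (induction n) (auto simp: sf_1 sf_mult)

lemma sf_sum: "is_subfield E \<Longrightarrow> (\<And>i. i \<in> A \<Longrightarrow> f i \<in> E) \<Longrightarrow> sum f A \<in> E"
  by (induction A rule: infinite_finite_induct) (auto simp: sf_0 sf_add)

lemma sf_UNIV: "is_subfield (UNIV :: 'a::field set)"
  by (auto simp: is_subfield_def)

lemma poly_over_poly: "is_subfield E \<Longrightarrow> F \<subseteq> E \<Longrightarrow> poly_over F p \<Longrightarrow> x \<in> E \<Longrightarrow> poly p x \<in> E"
  unfolding poly_altdef poly_over_def
  by (intro sf_sum) (auto intro!: sf_mult sf_power)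

context
  fixes F :: "'a::field set"
  assumes F: "is_subfield F"
begin

lemma po_0: "poly_over F 0"
  using F by (simp add: poly_over_def sf_0)

lemma po_const: "c \<in> F \<Longrightarrow> poly_over F [:c:]"
  using F by (simp add: poly_over_def sf_0 coeff_pCons split: nat.splits)

lemma po_pCons: "c \<in> F \<Longrightarrow> poly_over F p \<Longrightarrow> poly_over F (pCons c p)"
  using F by (simp add: poly_over_def sf_0 coeff_pCons split: nat.splits)

lemma po_monom: "c \<in> F \<Longrightarrow> poly_over F (monom c n)"
  using F by (simp add: poly_over_def sf_0 coeff_monom)

lemma po_add: "poly_over F p \<Longrightarrow> poly_over F q \<Longrightarrow> poly_over F (p + q)"
  using F by (simp add: poly_over_def sf_add)

lemma po_diff: "poly_over F p \<Longrightarrow> poly_over F q \<Longrightarrow> poly_over F (p - q)"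
  using F by (simp add: poly_over_def sf_diff)

lemma po_uminus: "poly_over F p \<Longrightarrow> poly_over F (- p)"
  using F by (simp add: poly_over_def sf_uminus)

lemma po_smult: "c \<in> F \<Longrightarrow> poly_over F p \<Longrightarrow> poly_over F (smult c p)"
  using F by (simp add: poly_over_def sf_mult)

lemma po_mult: "poly_over F p \<Longrightarrow> poly_over F q \<Longrightarrow> poly_over F (p * q)"
  using F unfolding poly_over_def coeff_mult by (auto intro!: sf_sum sf_mult)

lemma sf_of_nat: "of_nat n \<in> F"
  using F by (induction n) (auto simp: sf_0 sf_1 sf_add)

lemma po_pderiv: "poly_over F p \<Longrightarrow> poly_over F (pderiv p)"
  unfolding poly_over_def coeff_pderiv by (intro allI sf_mult[OF F] sf_of_nat) auto

lemma po_pcompose: "poly_over F p \<Longrightarrow> poly_over F q \<Longrightarrow> poly_over F (pcompose p q)"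
proof (induction p rule: pCons_induct)
  case 0 then show ?case by (simp add: po_0)
next
  case (pCons a p)
  have "poly_over F p" "a \<in> F" using pCons(3) unfolding poly_over_def
    by (metis coeff_pCons_Suc, metis coeff_pCons_0)
  then show ?case using pCons by (simp add: pcompose_pCons po_add po_const po_mult)
qed

lemma po_Poly: "set xs \<subseteq> F \<Longrightarrow> poly_over F (Poly xs)"
  using F by (auto simp: poly_over_def nth_default_def sf_0 subsetD)

lemma po_divmod_aux:
  assumes "q \<noteq> 0" "poly_over F q"
  shows "poly_over F p \<Longrightarrow> poly_over F (p div q) \<and> poly_over F (p mod q)"
proof (induction "degree p" arbitrary: p rule: less_induct)
  case less
  show ?case
  proof (cases "degree p < degree q")
    case True
    then show ?thesis using less(2) by (simp add: div_poly_less mod_poly_less po_0)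
  next
    case False
    define c where "c = lead_coeff p / lead_coeff q"
    define m where "m = degree p - degree q"
    define r where "r = p - monom c m * q"
    have cF: "c \<in> F" unfolding c_def using less(2) assms(2) F
      by (simp add: poly_over_def sf_divide)
    have rF: "poly_over F r" unfolding r_def
      by (intro po_diff po_mult po_monom less(2) assms(2) cF)
    have p_eq: "p = r + monom c m * q" by (simp add: r_def)
    have IHr: "poly_over F (r div q) \<and> poly_over F (r mod q)"
    proof (cases "r = 0")
      case True then show ?thesis by (simp add: po_0)
    next
      case False
      have "degree (monom c m * q) \<le> degree p"
        using False degree_mult_le[of "monom c m" q] degree_monom_le[of c m]
        by (smt (verit, ccfv_SIG) \<open>\<not> degree p < degree q\<close> add.commute le_add_diff_inverse2 le_trans linorder_not_less m_def nat_add_left_cancel_le)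
      then have dr: "degree r \<le> degree p" unfolding r_def
        by (meson degree_diff_le le_refl)
      have "coeff r (degree p) = 0"
        unfolding r_def using \<open>\<not> degree p < degree q\<close> assms(1)
        by (simp add: coeff_monom_mult m_def c_def)
      then have "degree r \<noteq> degree p" using False by (metis leading_coeff_0_iff)
      then have "degree r < degree p" using dr by simp
      then show ?thesis using less(1) rF by blast
    qed
    have "p div q = monom c m + r div q" using p_eq assms(1) by simp
    moreover have "p mod q = r mod q" using p_eq by simp
    ultimately show ?thesis using IHr cF by (simp add: po_add po_monom)
  qed
qed

lemma po_div: "poly_over F p \<Longrightarrow> poly_over F q \<Longrightarrow> poly_over F (p div q)"
  using po_divmod_aux[of q p] by (cases "q = 0") (auto simp: po_0)

lemma po_mod: "poly_over F p \<Longrightarrow> poly_over F q \<Longrightarrow> poly_over F (p mod q)"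
  using po_divmod_aux[of q p] by (cases "q = 0") auto

end



section \<open>Characteristic 2\<close>

context
  assumes two: "(2::'a::field) = 0"
begin

lemma c2_add_self: "(x::'a) + x = 0"
  using two by (metis mult_2 mult_zero_left)

lemma c2_uminus: "- (x::'a) = x"
  using c2_add_self[of x] by (metis add_eq_0_iff)

lemma c2_diff: "(x::'a) - y = x + y"
  using c2_uminus[of y] by (metis diff_conv_add_uminus)

lemma c2_sq_add: "((x::'a) + y)^2 = x^2 + y^2"
proof -
  have "(x + y)^2 = x^2 + y^2 + 2*x*y" by (simp add: power2_sum)
  then show ?thesis using two by simp
qed

lemma c2_pderiv_X2: "pderiv [:0, 0, 1::'a:] = 0"
  using two by (simp add: pderiv_pCons)

lemma c2_pderiv_pcomp: "pderiv (pcompose p [:0, 0, 1::'a:]) = 0"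
  by (simp add: pderiv_pcompose c2_pderiv_X2)

lemma c2_sq_sum: "(\<Sum>i\<in>A. f i :: 'a)^2 = (\<Sum>i\<in>A. (f i)^2)"
  by (induction A rule: infinite_finite_induct) (auto simp: c2_sq_add)

end

section \<open>Square span\<close>

inductive_set sqspan :: "'a::field set \<Rightarrow> 'a set \<Rightarrow> 'a set" for F E where
  sq0: "0 \<in> sqspan F E"
| sqS: "k \<in> F \<Longrightarrow> u \<in> E \<Longrightarrow> s \<in> sqspan F E \<Longrightarrow> k * u^2 + s \<in> sqspan F E"

lemma sqspan_add: "x \<in> sqspan F E \<Longrightarrow> y \<in> sqspan F E \<Longrightarrow> x + y \<in> sqspan F E"
  by (induction x rule: sqspan.induct) (auto simp: add.assoc intro: sqspan.intros)

lemma sqspan_sq: "k \<in> F \<Longrightarrow> u \<in> E \<Longrightarrow> k * u^2 \<in> sqspan F E"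
  using sqS[OF _ _ sq0] by fastforce

lemma sqspan_scale: assumes F: "is_subfield F" and k: "k \<in> F" and x: "x \<in> sqspan F E"
  shows "k * x \<in> sqspan F E"
  using x
proof (induction x rule: sqspan.induct)
  case sq0 then show ?case by (simp add: sqspan.sq0)
next
  case (sqS k' u s)
  have "k * (k' * u\<^sup>2 + s) = (k * k') * u^2 + k * s" by (simp add: algebra_simps)
  moreover have "k * k' \<in> F" using sqS(1) sf_mult[OF F k] by blast
  ultimately show ?case using sqspan.sqS[OF _ sqS(2) sqS(4)] by metis
qed

lemma sqspan_mult_sq: assumes E: "is_subfield E" and u: "u \<in> E" and y: "y \<in> sqspan F E"
  shows "u^2 * y \<in> sqspan F E"
  using y
proof (induction y rule: sqspan.induct)
  case sq0 then show ?case by (simp add: sqspan.sq0)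
next
  case (sqS k v s)
  have "u^2 * (k * v\<^sup>2 + s) = k * (u*v)^2 + u^2 * s" by (simp add: algebra_simps power_mult_distrib)
  moreover have "u * v \<in> E" using sqS(2) sf_mult[OF E u] by blast
  ultimately show ?case using sqspan.sqS[OF sqS(1) _ sqS(4)] by metis
qed

lemma sqspan_mult: assumes F: "is_subfield F" and E: "is_subfield E"
    and x: "x \<in> sqspan F E" and y: "y \<in> sqspan F E"
  shows "x * y \<in> sqspan F E"
  using x
proof (induction x rule: sqspan.induct)
  case sq0 then show ?case by (simp add: sqspan.sq0)
next
  case (sqS k u s)
  have "(k * u\<^sup>2 + s) * y = k * (u^2 * y) + s * y" by (simp add: algebra_simps)
  moreover have "u^2 * y \<in> sqspan F E" by (rule sqspan_mult_sq[OF E sqS(2) y])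
  then have "k * (u^2 * y) \<in> sqspan F E" by (rule sqspan_scale[OF F sqS(1)])
  ultimately show ?case using sqspan_add[OF _ sqS(4)] by metis
qed

lemma sqspan_subset: assumes "is_subfield E" "F \<subseteq> E" shows "sqspan F E \<subseteq> E"
proof
  fix x assume "x \<in> sqspan F E" then show "x \<in> E"
    by (induction x rule: sqspan.induct) (use assms in \<open>auto intro!: sf_add sf_mult sf_power sf_0\<close>)
qed

lemma sqspan_F: assumes "is_subfield E" shows "F \<subseteq> sqspan F E"
proof
  fix k assume "k \<in> F"
  then have "k * 1^2 \<in> sqspan F E" using assms by (intro sqspan_sq) (auto simp: sf_1)
  then show "k \<in> sqspan F E" by simp
qed

lemma sqspan_mono: "F \<subseteq> F' \<Longrightarrow> sqspan F E \<subseteq> sqspan F' E"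
proof
  fix x assume FF: "F \<subseteq> F'" and "x \<in> sqspan F E" from this(2) show "x \<in> sqspan F' E"
    by (induction x rule: sqspan.induct) (use FF in \<open>auto intro: sqspan.intros\<close>)
qed

lemma sqspan_in_field: assumes M: "is_subfield M" "F \<subseteq> M" "\<forall>u\<in>E. u^2 \<in> M"
  shows "sqspan F E \<subseteq> M"
proof
  fix x assume "x \<in> sqspan F E" then show "x \<in> M"
    by (induction x rule: sqspan.induct) (use M in \<open>auto intro!: sf_add sf_mult sf_0\<close>)
qed

lemma sqspan_subfield: assumes F: "is_subfield F" and E: "is_subfield E" and FE: "F \<subseteq> E"
  shows "is_subfield (sqspan F E)"
proof -
  have m1: "-1 \<in> F" by (rule sf_uminus[OF F sf_1[OF F]])
  have D: "x - y \<in> sqspan F E" if "x \<in> sqspan F E" "y \<in> sqspan F E" for x y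
  proof -
    have "(-1) * y \<in> sqspan F E" using sqspan_scale[OF F m1 that(2)] .
    then have "x + (-1) * y \<in> sqspan F E" by (rule sqspan_add[OF that(1)])
    then show ?thesis by simp
  qed
  have I: "inverse x \<in> sqspan F E" if "x \<in> sqspan F E" "x \<noteq> 0" for x
  proof -
    have xE: "x \<in> E" using that sqspan_subset[OF E FE] by auto
    have "(inverse x)^2 * x \<in> sqspan F E"
      by (rule sqspan_mult_sq[OF E sf_inverse[OF E xE] that(1)])
    moreover have "(inverse x)^2 * x = inverse x" using that(2) by (simp add: power2_eq_square)
    ultimately show ?thesis by simp
  qed
  have O: "1 \<in> sqspan F E" using sqspan_F[OF E] sf_1[OF F] by auto
  show ?thesis
    unfolding is_subfield_def
  proof (intro conjI ballI impI)
    show "0 \<in> sqspan F E" by (rule sqspan.sq0)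
  qed (auto intro: O D I sqspan_add sqspan_mult[OF F E])
qed

lemma D_ts_sqspan: assumes "\<forall>i<n. a i \<in> F"
  shows "D_ts E n a \<subseteq> sqspan F E"
proof
  fix c assume "c \<in> D_ts E n a"
  then obtain x where x: "\<forall>i<n. x i \<in> E" "c = (\<Sum>i<n. a i * (x i)^2)" unfolding D_ts_def by auto
  have "\<forall>m\<le>n. (\<Sum>i<m. a i * (x i)^2) \<in> sqspan F E"
  proof (intro allI impI)
    fix m assume "m \<le> n" then show "(\<Sum>i<m. a i * (x i)^2) \<in> sqspan F E"
    proof (induction m)
      case 0 then show ?case by (simp add: sqspan.sq0)
    next
      case (Suc m)
      then have "(\<Sum>i<m. a i * (x i)^2) \<in> sqspan F E" by simp
      moreover have "a m \<in> F" "x m \<in> E" using Suc(2) assms x by auto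
      ultimately have "a m * (x m)^2 + (\<Sum>i<m. a i * (x i)^2) \<in> sqspan F E"
        using sqspan.sqS by blast
      then show ?case by (simp add: add.commute)
    qed
  qed
  then show "c \<in> sqspan F E" using x by auto
qed

lemma adjoin_subfield: "is_subfield (adjoin F x)"
  unfolding adjoin_def is_subfield_def by auto

lemma adjoin_F: "F \<subseteq> adjoin F x" and adjoin_x: "x \<in> adjoin F x"
  unfolding adjoin_def by auto

lemma adjoin_min: "is_subfield E \<Longrightarrow> F \<subseteq> E \<Longrightarrow> x \<in> E \<Longrightarrow> adjoin F x \<subseteq> E"
  unfolding adjoin_def by auto



lemma sum_even_odd: "(\<Sum>j<2*(n::nat). f j) = (\<Sum>i<n. f (2*i) + f (2*i+1))"
  by (induction n) (auto simp: mult_2 ac_simps)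

lemma minpoly_deg: assumes "is_min_poly F z p" shows "degree p \<ge> 1" "p \<noteq> 0"
proof -
  show "p \<noteq> 0" using assms unfolding is_min_poly_def by auto
  show "degree p \<ge> 1"
  proof (rule ccontr)
    assume "\<not> 1 \<le> degree p"
    then have "degree p = 0" by simp
    then obtain c where "p = [:c:]" by (metis degree_eq_zeroE)
    then show False using assms unfolding is_min_poly_def by auto
  qed
qed

lemma po_sum: "is_subfield F \<Longrightarrow> (\<And>i. i \<in> A \<Longrightarrow> poly_over F (f i)) \<Longrightarrow> poly_over F (sum f A)"
  by (induction A rule: infinite_finite_induct) (auto simp: po_0 po_add)

lemma sep_in_sqspan:
  assumes two: "(2::'a::field) = 0" and F: "is_subfield F" and E: "is_subfield E" and FE: "F \<subseteq> E"
    and zE: "z \<in> E" and sep: "separable_elem F (z::'a)"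
  shows "z \<in> sqspan F E"
proof -
  obtain p where mp: "is_min_poly F z p" and cop: "coprime p (pderiv p)"
    using sep unfolding separable_elem_def separable_poly_def by auto
  define d where "d = degree p"
  define c where "c = coeff p"
  have d1: "d \<ge> 1" using minpoly_deg[OF mp] d_def by simp
  have cF: "c i \<in> F" for i using mp unfolding is_min_poly_def poly_over_def c_def by auto
  have c0: "c j = 0" if "j > d" for j using that unfolding c_def d_def by (simp add: coeff_eq_0)
  define pe where "pe = (\<Sum>i\<le>d. c (2*i) * (z^2)^i)"
  define po where "po = (\<Sum>i\<le>d. c (2*i+1) * (z^2)^i)"
  have zz: "(z^2)^i = (z^i)^2" for i :: nat by (metis power_mult mult.commute)
  have "poly p z = (\<Sum>j\<le>d. c j * z^j)" unfolding poly_altdef c_def d_def ..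
  also have "\<dots> = (\<Sum>j<2*(d+1). c j * z^j)"
    by (rule sum.mono_neutral_left) (auto simp: c0)
  also have "\<dots> = (\<Sum>i<d+1. c (2*i) * z^(2*i) + c (2*i+1) * z^(2*i+1))"
    by (rule sum_even_odd)
  also have "\<dots> = pe + z * po"
    unfolding pe_def po_def zz
    by (simp add: sum.distrib sum_distrib_left power_mult lessThan_Suc_atMost algebra_simps)
  finally have pz: "pe + z * po = 0" using mp unfolding is_min_poly_def by simp
  define Q where "Q = (\<Sum>i\<le>d. monom (c (2*i+1)) (2*i))"
  have QF: "poly_over F Q" unfolding Q_def by (intro po_sum F po_monom[OF F] cF)
  have Qz: "poly Q z = po" unfolding Q_def po_def by (simp add: poly_sum poly_monom power_mult)
  have coeffQ: "coeff Q (2*i) = c (2*i+1)" for i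
  proof (cases "i \<le> d")
    case True
    have "coeff Q (2*i) = (\<Sum>k\<le>d. if 2*i = 2*k then c (2*k+1) else 0)"
      unfolding Q_def coeff_sum by (simp add: coeff_monom)
    also have "\<dots> = c (2*i+1)" using True by (simp add: sum.delta)
    finally show ?thesis .
  next
    case False
    then have "coeff Q (2*i) = 0" unfolding Q_def coeff_sum by (simp add: coeff_monom)
    moreover have "c (2*i+1) = 0" using False by (intro c0) simp
    ultimately show ?thesis by simp
  qed
  have degQ: "degree Q < d"
  proof -
    have "coeff Q j = 0" if "j \<ge> d" for j
      unfolding Q_def coeff_sum coeff_monom using that c0 by (intro sum.neutral) auto
    then have "degree Q \<le> d - 1" by (intro degree_le) auto
    then show ?thesis using d1 by simp
  qed
  have "Q \<noteq> 0"
  proof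
    assume Q0: "Q = 0"
    have "pderiv p = 0"
    proof (rule poly_eqI)
      fix n
      show "coeff (pderiv p) n = coeff 0 n"
      proof (cases "even n")
        case True
        then obtain i where "n = 2*i" by blast
        then show ?thesis using coeffQ[of i] Q0 by (simp add: coeff_pderiv c_def)
      next
        case False
        then obtain i where n: "n = 2*i+1" using oddE by blast
        have "(of_nat (Suc n) :: 'a) = of_nat 2 * of_nat (i+1)" unfolding n by simp
        also have "\<dots> = 0" using two by simp
        finally show ?thesis by (simp add: coeff_pderiv)
      qed
    qed
    then have "is_unit p" using cop by simp
    then show False using d1 d_def is_unit_iff_degree[of p] minpoly_deg(2)[OF mp] by simp
  qed
  then have "po \<noteq> 0"
    using mp QF degQ Qz unfolding is_min_poly_def d_def by force
  have zeq: "z = pe / po"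
  proof -
    have "z * po = - pe" using pz by (simp add: eq_neg_iff_add_eq_0 add.commute)
    then have "z * po = pe" using c2_uminus[OF two] by simp
    then show ?thesis using \<open>po \<noteq> 0\<close> by (simp add: field_simps)
  qed
  define S where "S = sqspan F E"
  have S: "is_subfield S" unfolding S_def by (rule sqspan_subfield[OF F E FE])
  have FS: "F \<subseteq> S" unfolding S_def by (rule sqspan_F[OF E])
  have z2S: "z^2 \<in> S" unfolding S_def using sqspan_sq[OF sf_1[OF F] zE] by simp
  have "pe \<in> S" unfolding pe_def
    by (intro sf_sum[OF S] sf_mult[OF S] sf_power[OF S] z2S) (use FS cF in auto)
  moreover have "po \<in> S" unfolding po_def
    by (intro sf_sum[OF S] sf_mult[OF S] sf_power[OF S] z2S) (use FS cF in auto)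
  ultimately show ?thesis using zeq sf_divide[OF S] S_def by simp
qed



lemma Sp_0: "subfield K (TR::'a::field ring) \<Longrightarrow> 0 \<in> R.Span K Us"
  using R.Span_subgroup_props(2)[of K Us] by simp

lemma Sp_add: "subfield K (TR::'a::field ring) \<Longrightarrow> x \<in> R.Span K Us \<Longrightarrow> y \<in> R.Span K Us \<Longrightarrow> x + y \<in> R.Span K Us"
  using R.Span_subgroup_props(3)[of K Us x y] by simp

lemma Sp_scale: "subfield K (TR::'a::field ring) \<Longrightarrow> k \<in> K \<Longrightarrow> y \<in> R.Span K Us \<Longrightarrow> k * y \<in> R.Span K Us"
  using R.Span_smult_closed[of K Us k y] by simp

lemma Sp_base: "subfield K (TR::'a::field ring) \<Longrightarrow> u \<in> set Us \<Longrightarrow> u \<in> R.Span K Us"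
  using R.Span_base_incl[of K Us] by auto

lemma Sp_sum: assumes K: "subfield K (TR::'a::field ring)"
  shows "(\<And>i. i \<in> A \<Longrightarrow> f i \<in> R.Span K Us) \<Longrightarrow> sum f A \<in> R.Span K Us"
proof (induction A rule: infinite_finite_induct)
  case (infinite A) then show ?case by (subst sum.infinite[OF infinite(1)]) (rule Sp_0[OF K])
next
  case empty then show ?case by (subst sum.empty) (rule Sp_0[OF K])
next
  case (insert x A)
  have "f x + sum f A \<in> R.Span K Us" using insert by (intro Sp_add[OF K]) auto
  then show ?case by (simp only: sum.insert[OF insert(1,2)])
qed

lemma filter_len: assumes K: "subfield K (TR::'a::field ring)"
  shows "\<exists>Ys. R.independent K Ys \<and> R.Span K Ys = R.Span K Us \<and> length Ys \<le> length Us
    \<and> (length Ys = length Us \<longrightarrow> Ys = Us)"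
proof (induction Us)
  case Nil then show ?case by auto
next
  case (Cons u Us)
  then obtain Ys where Ys: "R.independent K Ys" "R.Span K Ys = R.Span K Us" "length Ys \<le> length Us"
    "length Ys = length Us \<longrightarrow> Ys = Us" by auto
  show ?case
  proof (cases "u \<in> R.Span K Us")
    case True
    have "R.Span K (u # Us) \<subseteq> R.Span K Us"
      using R.mono_Span_subset[OF K, of "u # Us" Us] True R.Span_base_incl[OF K, of Us] by auto
    moreover have "R.Span K Us \<subseteq> R.Span K (u # Us)"
      using R.mono_Span[OF K, of Us u] by simp
    ultimately show ?thesis using Ys by (intro exI[of _ Ys]) auto
  next
    case False
    have "R.independent K (u # Ys)" using R.li_Cons[of u K Ys] False Ys by simp
    moreover have "R.Span K (u # Ys) = R.Span K (u # Us)" using Ys(2) by simp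
    ultimately show ?thesis using Ys by (intro exI[of _ "u # Ys"]) auto
  qed
qed

lemma span_len_dim_indep: assumes K: "subfield K (TR::'a::field ring)"
  and d: "R.dimension d K E" and sp: "R.Span K Ws = E" and len: "length Ws = d"
  shows "R.independent K Ws"
proof -
  obtain Ys where Ys: "R.independent K Ys" "R.Span K Ys = R.Span K Ws" "length Ys \<le> length Ws"
    "length Ys = length Ws \<longrightarrow> Ys = Ws" using filter_len[OF K] by blast
  have "R.dimension (length Ys) K E" using R.dimensionI[OF K Ys(1)] Ys(2) sp by simp
  then have "length Ys = d" using R.dimension_is_inj[OF K _ d] by simp
  then show ?thesis using Ys len by simp
qed

lemma uniq_coeffs: assumes K: "subfield K (TR::'a::field ring)" and ind: "R.independent K Ws"
  and f: "\<forall>j<length Ws. f j \<in> K" and g: "\<forall>j<length Ws. g j \<in> K"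
  and eq: "(\<Sum>j<length Ws. f j * Ws!j) = (\<Sum>j<length Ws. g j * Ws!j)"
  shows "\<forall>j<length Ws. f j = g j"
proof -
  define a where "a = (\<Sum>j<length Ws. f j * Ws!j)"
  have aS: "a \<in> R.Span K Ws" unfolding a_def using Span_sum[OF K] f by blast
  define Kf where "Kf = map f [0..<length Ws]"
  define Kg where "Kg = map g [0..<length Ws]"
  have 1: "set Kf \<subseteq> K \<and> length Kf = length Ws \<and> a = R.combine Kf Ws"
    using f combine_sum[of Kf Ws] by (auto simp: Kf_def a_def)
  have 2: "set Kg \<subseteq> K \<and> length Kg = length Ws \<and> a = R.combine Kg Ws"
    using g combine_sum[of Kg Ws] eq by (auto simp: Kg_def a_def)
  have "Kf = Kg" using R.unique_decomposition[OF K ind aS] 1 2 by blast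
  show ?thesis
  proof (intro allI impI)
    fix j assume j: "j < length Ws"
    have "f j = Kf!j" using j by (simp add: Kf_def)
    also have "\<dots> = Kg!j" using \<open>Kf = Kg\<close> by simp
    also have "\<dots> = g j" using j by (simp add: Kg_def)
    finally show "f j = g j" .
  qed
qed

lemma poly_Poly_sum: "poly (Poly xs) (z::'a::field) = (\<Sum>j<length xs. xs!j * z^j)"
  by (induction xs) (auto simp: sum.lessThan_Suc_shift sum_distrib_left mult.assoc mult.left_commute simp del: sum.lessThan_Suc)

section \<open>Algebraic elements and minimal polynomials\<close>

lemma algebraic:
  assumes F: "is_subfield F" and L: "is_subfield L" and fd: "R.finite_dimension F L"
    and zL: "z \<in> L"
  shows "\<exists>q. poly_over F q \<and> q \<noteq> 0 \<and> poly q z = 0"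
proof -
  have K: "subfield F TR" by (rule is_subfield_subfield[OF F])
  obtain n where d: "R.dimension n F L" using fd by auto
  define Zs where "Zs = map (\<lambda>i. z^i) [0..<Suc n]"
  have sub: "set Zs \<subseteq> L" unfolding Zs_def using zL sf_power[OF L] by auto
  have "\<not> R.independent F Zs"
  proof
    assume "R.independent F Zs"
    then have "length Zs \<le> n" using R.independent_length_le_dimension[OF K d _ sub] by simp
    then show False by (simp add: Zs_def)
  qed
  then obtain Ks where Ks: "length Ks = length Zs" "R.combine Ks Zs = 0" "set Ks \<subseteq> F" "set Ks \<noteq> {0}"
    using R.dependent_imp_non_trivial_combine[OF K, of Zs] by auto
  define q where "q = Poly Ks"
  have "poly_over F q" unfolding q_def using po_Poly[OF F Ks(3)] .
  moreover have "q \<noteq> 0"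
  proof
    assume "q = 0"
    then obtain m where "Ks = replicate m 0" unfolding q_def Poly_eq_0 by auto
    moreover have "Ks \<noteq> []" using Ks(1) by (auto simp: Zs_def)
    ultimately show False using Ks(4) by (cases m) auto
  qed
  moreover have "poly q z = 0"
  proof -
    have "poly q z = (\<Sum>j<length Zs. Ks!j * Zs!j)"
      unfolding q_def poly_Poly_sum Ks(1) by (intro sum.cong) (auto simp: Zs_def nth_map_upt simp del: upt_Suc)
    also have "\<dots> = 0" using combine_sum[OF Ks(1)] Ks(2) by simp
    finally show ?thesis .
  qed
  ultimately show ?thesis by blast
qed

lemma minpoly_exists:
  assumes F: "is_subfield F" and ex: "\<exists>q. poly_over F q \<and> q \<noteq> 0 \<and> poly q z = 0"
  shows "\<exists>p. is_min_poly F z p"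
proof -
  define P where "P = (\<lambda>n. \<exists>q. poly_over F q \<and> q \<noteq> 0 \<and> poly q z = 0 \<and> degree q = n)"
  have "\<exists>n. P n" using ex unfolding P_def by blast
  then obtain n where n: "P n" and nmin: "\<And>m. P m \<Longrightarrow> n \<le> m"
    by (metis LeastI_ex Least_le)
  then obtain q where q: "poly_over F q" "q \<noteq> 0" "poly q z = 0" "degree q = n" unfolding P_def by auto
  define p where "p = smult (inverse (lead_coeff q)) q"
  have lcF: "inverse (lead_coeff q) \<in> F" using q(1) F unfolding poly_over_def by (simp add: sf_inverse)
  have "poly_over F p" unfolding p_def by (rule po_smult[OF F lcF q(1)])
  moreover have "lead_coeff p = 1"
  proof -
    have "lead_coeff p = inverse (lead_coeff q) * lead_coeff q" unfolding p_def by simp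
    then show ?thesis using q(2) by simp
  qed
  moreover have "poly p z = 0" unfolding p_def using q(3) by simp
  moreover have "degree p = n"
  proof -
    have "inverse (lead_coeff q) \<noteq> 0" using q(2) by simp
    then show ?thesis unfolding p_def using q(4) by (simp only: degree_smult_eq if_False)
  qed
  moreover have "\<forall>r. poly_over F r \<and> r \<noteq> 0 \<and> poly r z = 0 \<longrightarrow> n \<le> degree r"
    using nmin unfolding P_def by blast
  ultimately show ?thesis unfolding is_min_poly_def by auto
qed

lemma minpoly_dvd:
  assumes F: "is_subfield F" and mp: "is_min_poly F z p" and T: "poly_over F T" and Tz: "poly T z = 0"
  shows "p dvd T"
proof -
  have pF: "poly_over F p" and p0: "p \<noteq> 0" and pz: "poly p z = 0"
    using mp minpoly_deg[OF mp] unfolding is_min_poly_def by auto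
  have mF: "poly_over F (T mod p)" by (rule po_mod[OF F T pF])
  have "poly (T mod p) z = 0"
  proof -
    have "T = (T div p) * p + T mod p" by simp
    then have "poly T z = poly (T div p) z * poly p z + poly (T mod p) z"
      by (metis poly_add poly_mult)
    then show ?thesis using pz Tz by simp
  qed
  then have "T mod p = 0"
    using degree_mod_less[OF p0, of T] mp mF unfolding is_min_poly_def by force
  then show ?thesis by (simp add: mod_eq_0_iff_dvd)
qed

lemma minpoly_coprime:
  assumes F: "is_subfield F" and mp: "is_min_poly F z p" and d0: "pderiv p \<noteq> 0"
  shows "coprime p (pderiv p)"
proof -
  have pF: "poly_over F p" and p0: "p \<noteq> 0" and pz: "poly p z = 0"
    using mp minpoly_deg[OF mp] unfolding is_min_poly_def by auto
  have dF: "poly_over F (pderiv p)" by (rule po_pderiv[OF F pF])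
  have degd: "degree (pderiv p) < degree p"
  proof -
    have "coeff (pderiv p) j = 0" if "j \<ge> degree p" for j
      using that by (simp add: coeff_pderiv coeff_eq_0)
    then have "degree (pderiv p) \<le> degree p - 1" by (intro degree_le) auto
    then show ?thesis using minpoly_deg(1)[OF mp] by simp
  qed
  define I where "I = {h. \<exists>u v. poly_over F u \<and> poly_over F v \<and> h = u * p + v * pderiv p}"
  define P where "P = (\<lambda>n. \<exists>h\<in>I. h \<noteq> 0 \<and> degree h = n)"
  have po1: "poly_over F 1" using F by (simp add: poly_over_def sf_0 sf_1)
  have "pderiv p \<in> I" unfolding I_def using po_0[OF F] po1
    by (intro CollectI exI[of _ 0] exI[of _ 1]) simp
  then have "\<exists>n. P n" using d0 unfolding P_def by blast
  then obtain n where n: "P n" and nmin: "\<And>m. P m \<Longrightarrow> n \<le> m"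
    by (metis LeastI_ex Least_le)
  then obtain h where hI: "h \<in> I" and h0: "h \<noteq> 0" and hn: "degree h = n" unfolding P_def by auto
  then obtain u v where uv: "poly_over F u" "poly_over F v" "h = u * p + v * pderiv p"
    unfolding I_def by auto
  have hF: "poly_over F h" using uv by (simp add: po_add po_mult[OF F] pF dF F)
  have red: "h dvd g" if gI: "g \<in> I" and gF: "poly_over F g" for g
  proof -
    obtain u' v' where uv': "poly_over F u'" "poly_over F v'" "g = u' * p + v' * pderiv p"
      using gI unfolding I_def by auto
    define k where "k = g div h"
    have kF: "poly_over F k" unfolding k_def by (rule po_div[OF F gF hF])
    have "g mod h = g - k * h" unfolding k_def by (simp add: minus_div_mult_eq_mod)
    also have "\<dots> = (u' - k * u) * p + (v' - k * v) * pderiv p"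
      unfolding uv(3) uv'(3) by (simp add: algebra_simps)
    finally have gm: "g mod h = (u' - k * u) * p + (v' - k * v) * pderiv p" .
    have "poly_over F (u' - k * u)" "poly_over F (v' - k * v)"
      using uv(1,2) uv'(1,2) kF by (simp_all add: po_diff[OF F] po_mult[OF F])
    then have "g mod h \<in> I" unfolding I_def gm by blast
    then have "g mod h = 0"
      using degree_mod_less[OF h0, of g] nmin hn unfolding P_def by force
    then show ?thesis by (simp add: mod_eq_0_iff_dvd)
  qed
  have "p \<in> I" unfolding I_def using po_0[OF F] po1
    by (intro CollectI exI[of _ 1] exI[of _ 0]) simp
  then have hp: "h dvd p" using red pF by blast
  have hd: "h dvd pderiv p" using red \<open>pderiv p \<in> I\<close> dF by blast
  define k where "k = p div h"
  have kF: "poly_over F k" unfolding k_def by (rule po_div[OF F pF hF])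
  have pk: "p = h * k" unfolding k_def using hp by simp
  have "degree h = 0"
  proof (cases "poly h z = 0")
    case True
    then have "degree p \<le> degree h" using mp hF h0 unfolding is_min_poly_def by blast
    moreover have "degree h \<le> degree (pderiv p)" using dvd_imp_degree_le[OF hd d0] .
    ultimately show ?thesis using degd by simp
  next
    case False
    then have "poly k z = 0" using pz pk by simp
    moreover have "k \<noteq> 0" using pk p0 by auto
    ultimately have "degree p \<le> degree k" using mp kF unfolding is_min_poly_def by blast
    moreover have "degree p = degree h + degree k" using pk p0 degree_mult_eq[OF h0] by auto
    ultimately show ?thesis by simp
  qed
  then have hu: "is_unit h" using h0 is_unit_iff_degree by blast
  show ?thesis
  proof (rule coprimeI)
    fix c assume "c dvd p" "c dvd pderiv p"
    then have "c dvd h" using uv by simp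
    then show "is_unit c" using hu by (rule dvd_unit_imp_unit)
  qed
qed



definition ratf :: "'a::field set \<Rightarrow> 'a \<Rightarrow> 'a set" where
  "ratf F y = {poly r y / poly s y | r s. poly_over F r \<and> poly_over F s \<and> poly s y \<noteq> 0}"

lemma po_one: "is_subfield F \<Longrightarrow> poly_over F 1"
  by (simp add: poly_over_def sf_0 sf_1)

lemma ratf_subfield: assumes F: "is_subfield F" shows "is_subfield (ratf F y)"
proof -
  have mem: "poly r y / poly s y \<in> ratf F y" if "poly_over F r" "poly_over F s" "poly s y \<noteq> 0" for r s
    using that unfolding ratf_def by blast
  have z: "0 \<in> ratf F y" using mem[OF po_0[OF F] po_one[OF F]] by simp
  have o: "1 \<in> ratf F y" using mem[OF po_one[OF F] po_one[OF F]] by simp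
  have ops: "x1 + x2 \<in> ratf F y \<and> x1 - x2 \<in> ratf F y \<and> x1 * x2 \<in> ratf F y"
    if X1: "x1 \<in> ratf F y" and X2: "x2 \<in> ratf F y" for x1 x2
  proof -
    obtain r1 s1 where 1: "poly_over F r1" "poly_over F s1" "poly s1 y \<noteq> 0" "x1 = poly r1 y / poly s1 y"
      using X1 unfolding ratf_def by blast
    obtain r2 s2 where 2: "poly_over F r2" "poly_over F s2" "poly s2 y \<noteq> 0" "x2 = poly r2 y / poly s2 y"
      using X2 unfolding ratf_def by blast
    have s12: "poly (s1 * s2) y \<noteq> 0" using 1 2 by simp
    have a: "x1 + x2 = poly (r1 * s2 + r2 * s1) y / poly (s1 * s2) y"
      unfolding 1(4) 2(4) using 1(3) 2(3) by (simp add: add_frac_eq)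
    have b: "x1 - x2 = poly (r1 * s2 - r2 * s1) y / poly (s1 * s2) y"
      unfolding 1(4) 2(4) using 1(3) 2(3) by (simp add: diff_frac_eq)
    have c: "x1 * x2 = poly (r1 * r2) y / poly (s1 * s2) y"
      unfolding 1(4) 2(4) by simp
    show ?thesis unfolding a b c using 1 2 s12
      by (intro conjI mem) (auto intro!: po_add[OF F] po_diff[OF F] po_mult[OF F])
  qed
  have inv: "inverse x \<in> ratf F y" if X: "x \<in> ratf F y" and X0: "x \<noteq> 0" for x
  proof -
    obtain r s where 1: "poly_over F r" "poly_over F s" "poly s y \<noteq> 0" "x = poly r y / poly s y"
      using X unfolding ratf_def by blast
    then have "poly r y \<noteq> 0" using X0 by simp
    then have "inverse x = poly s y / poly r y" using 1 by simp
    then show ?thesis using mem[OF 1(2,1) \<open>poly r y \<noteq> 0\<close>] by simp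
  qed
  show ?thesis unfolding is_subfield_def using z o ops inv by blast
qed

lemma ratf_F: assumes F: "is_subfield F" shows "F \<subseteq> ratf F y"
proof
  fix k assume k: "k \<in> F"
  have "poly [:k:] y / poly 1 y \<in> ratf F y" unfolding ratf_def
    using po_const[OF F k] po_one[OF F] by fastforce
  then show "k \<in> ratf F y" by simp
qed

lemma ratf_y: assumes F: "is_subfield F" shows "y \<in> ratf F y"
proof -
  have "poly_over F [:0, 1:]" by (intro po_pCons[OF F] po_const[OF F] sf_0[OF F] sf_1[OF F])
  then have "poly [:0, 1:] y / poly 1 y \<in> ratf F y" unfolding ratf_def
    using po_one[OF F] by fastforce
  then show ?thesis by simp
qed

lemma ratf_sub: assumes F: "is_subfield F" and E: "is_subfield E" and FE: "F \<subseteq> E" and yE: "y \<in> E"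
  shows "ratf F y \<subseteq> E"
  unfolding ratf_def using poly_over_poly[OF E FE _ yE] sf_divide[OF E] by auto

lemma subalg: assumes E: "is_subfield E" and ME: "M \<subseteq> E"
  shows "subalgebra M E (TR::'a::field ring)"
proof -
  have "subring E (TR::'a ring)" using subfieldE(1)[OF is_subfield_subfield[OF E]] .
  then have "subgroup E (add_monoid (TR::'a ring))" using subring.axioms(1) by blast
  moreover have "subalgebra_axioms M E (TR::'a ring)"
    unfolding subalgebra_axioms_def using ME sf_mult[OF E] by auto
  ultimately show ?thesis by (rule subalgebra.intro)
qed

lemma sq_span_incl:
  assumes two: "(2::'a::field) = 0" and Ki: "is_subfield K" and FK: "F \<subseteq> K"
    and EU: "E \<subseteq> R.Span K Us" and UW: "\<forall>u\<in>set Us. u^2 \<in> R.Span K Ws"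
  shows "sqspan F E \<subseteq> R.Span K (Ws :: 'a list)"
proof
  have K: "subfield K (TR::'a ring)" by (rule is_subfield_subfield[OF Ki])
  fix x assume "x \<in> sqspan F E"
  then show "x \<in> R.Span K Ws"
  proof (induction x rule: sqspan.induct)
    case sq0 then show ?case by (rule Sp_0[OF K])
  next
    case (sqS k u s)
    obtain f where f: "\<forall>j<length Us. f j \<in> K" "u = (\<Sum>j<length Us. f j * Us!j)"
      using EU sqS(2) Span_sum[OF K] by blast
    have "u^2 = (\<Sum>j<length Us. (f j)^2 * (Us!j)^2)"
      unfolding f(2) c2_sq_sum[OF two] by (simp add: power_mult_distrib)
    also have "\<dots> \<in> R.Span K Ws"
    proof (rule Sp_sum[OF K])
      fix j assume "j \<in> {..<length Us}"
      then have "(f j)^2 \<in> K" "(Us!j)^2 \<in> R.Span K Ws" using f(1) UW sf_power[OF Ki] by auto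
      then show "(f j)^2 * (Us!j)^2 \<in> R.Span K Ws" by (rule Sp_scale[OF K])
    qed
    finally have "k * u^2 \<in> R.Span K Ws" using Sp_scale[OF K] sqS(1) FK by blast
    then show ?case using Sp_add[OF K _ sqS(4)] by blast
  qed
qed



lemma span_list_mono:
  assumes "F \<subseteq> M" "subfield F (TR::'a::field ring)" "subfield M (TR::'a ring)"
  shows "R.Span F Us \<subseteq> R.Span M (Us::'a list)"
  using assms Span_sum by blast

lemma span_in_subfield:
  assumes E: "is_subfield E" and ME: "M \<subseteq> E" and UE: "set Us \<subseteq> E" and M: "subfield M (TR::'a::field ring)"
  shows "R.Span M (Us::'a list) \<subseteq> E"
proof
  fix x assume "x \<in> R.Span M Us"
  then obtain f where f: "\<forall>j<length Us. f j \<in> M" "x = (\<Sum>j<length Us. f j * Us!j)"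
    using Span_sum[OF M] by blast
  show "x \<in> E" unfolding f(2) using f(1) ME UE
    by (intro sf_sum[OF E] sf_mult[OF E]) (auto simp: subsetD)
qed

lemma sep_main:
  assumes two: "(2::'a::field) = 0" and F: "is_subfield F" and E: "is_subfield E" and L: "is_subfield L"
    and FE: "F \<subseteq> E" and EL: "E \<subseteq> L" and fd: "R.finite_dimension F L"
    and Esq: "E \<subseteq> sqspan F E" and zE: "z \<in> (E :: 'a set)"
  shows "separable_elem F z"
proof -
  have KF: "subfield F (TR::'a ring)" by (rule is_subfield_subfield[OF F])
  define M where "M = ratf F (z^2)"
  have Mi: "is_subfield M" unfolding M_def by (rule ratf_subfield[OF F])
  have KM: "subfield M (TR::'a ring)" by (rule is_subfield_subfield[OF Mi])
  have FM: "F \<subseteq> M" unfolding M_def by (rule ratf_F[OF F])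
  have z2M: "z^2 \<in> M" unfolding M_def by (rule ratf_y[OF F])
  have ME: "M \<subseteq> E" unfolding M_def
    by (rule ratf_sub[OF F E FE]) (use zE sf_power[OF E] in auto)
  have zM: "z \<in> M"
  proof (rule ccontr)
    assume zM: "z \<notin> M"
    obtain n0 where n0: "R.dimension n0 F L" using fd by auto
    obtain Bs where Bs: "R.independent F Bs" "length Bs = n0" "R.Span F Bs = L"
      using R.exists_base[OF KF n0] by auto
    have BsL: "set Bs \<subseteq> L" using Bs(3) Sp_base[OF KF] by blast
    have "R.Span M Bs = L"
    proof
      show "R.Span M Bs \<subseteq> L" by (rule span_in_subfield[OF L _ BsL KM]) (use ME EL in auto)
      show "L \<subseteq> R.Span M Bs" using span_list_mono[OF FM KF KM, of Bs] Bs(3) by simp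
    qed
    then have fdML: "R.finite_dimension M L" using R.Span_finite_dimension[OF KM, of Bs] by simp
    have fdME: "R.finite_dimension M E"
      by (rule R.subalbegra_incl_imp_finite_dimension[OF KM fdML subalg[OF E ME] EL])
    then obtain d where d: "R.dimension d M E" by auto
    have i1: "R.independent M [1]"
    proof (rule R.li_Cons)
      show "1 \<notin> R.Span M []" by simp
    qed auto
    have "z \<notin> R.Span M [1]"
    proof
      assume "z \<in> R.Span M [1]"
      then obtain f where "f 0 \<in> M" "z = f 0 * 1" using Span_sum[OF KM, of z "[1]"] by auto
      then show False using zM by simp
    qed
    then have i2: "R.independent M [z, 1]" using R.li_Cons[OF _ _ i1] by simp
    have s2: "set [z, 1] \<subseteq> E" using zE sf_1[OF E] by auto
    obtain Vs where Vs: "length (Vs @ [z, 1]) = d" "R.independent M (Vs @ [z, 1])"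
      "R.Span M (Vs @ [z, 1]) = E"
      using R.complete_base[OF KM d i2 s2] by auto
    define Us where "Us = Vs @ [z, 1]"
    define Ws where "Ws = map (\<lambda>u. u^2) Vs @ [1]"
    have UW: "\<forall>u\<in>set Us. u^2 \<in> R.Span M Ws"
    proof
      fix u assume "u \<in> set Us"
      then consider "u \<in> set Vs" | "u = z" | "u = 1" unfolding Us_def by auto
      then show "u^2 \<in> R.Span M Ws"
      proof cases
        case 1 then show ?thesis using Sp_base[OF KM, of "u^2" Ws] unfolding Ws_def by auto
      next
        case 2
        have "1 \<in> R.Span M Ws" using Sp_base[OF KM, of 1 Ws] unfolding Ws_def by auto
        then have "z^2 * 1 \<in> R.Span M Ws" by (rule Sp_scale[OF KM z2M])
        then show ?thesis using 2 by simp
      next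
        case 3 then show ?thesis using Sp_base[OF KM, of 1 Ws] unfolding Ws_def by auto
      qed
    qed
    have "E \<subseteq> R.Span M Ws"
      using sq_span_incl[OF two Mi FM _ UW] Esq Vs(3) unfolding Us_def by blast
    obtain Ys where Ys: "R.independent M Ys" "R.Span M Ys = R.Span M Ws" "length Ys \<le> length Ws"
      using filter_len[OF KM, of Ws] by blast
    have "set Us \<subseteq> R.Span M Ys"
      using Vs(3) Sp_base[OF KM, of _ Us] Ys(2) \<open>E \<subseteq> R.Span M Ws\<close> unfolding Us_def by blast
    then have "length Us \<le> length Ys"
      using R.independent_length_le[OF KM _ Ys(1)] Vs(2) unfolding Us_def by blast
    then show False using Ys(3) unfolding Us_def Ws_def by simp
  qed
  then obtain r s where rs: "poly_over F r" "poly_over F s" "poly s (z^2) \<noteq> 0"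
    "z = poly r (z^2) / poly s (z^2)"
    unfolding M_def ratf_def by blast
  have zL: "z \<in> L" using zE EL by auto
  obtain p where mp: "is_min_poly F z p"
    using minpoly_exists[OF F algebraic[OF F L fd zL]] by blast
  have pF: "poly_over F p" and pz: "poly p z = 0" using mp unfolding is_min_poly_def by auto
  have "pderiv p \<noteq> 0"
  proof
    assume p'0: "pderiv p = 0"
    define X2 where "X2 = [:0, 0, 1::'a:]"
    define T where "T = [:0, 1:] * pcompose s X2 - pcompose r X2"
    have X2F: "poly_over F X2" unfolding X2_def
      by (intro po_pCons[OF F] po_const[OF F] sf_0[OF F] sf_1[OF F])
    have X1F: "poly_over F [:0, 1:]"
      by (intro po_pCons[OF F] po_const[OF F] sf_0[OF F] sf_1[OF F])
    have TF: "poly_over F T" unfolding T_def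
      by (intro po_diff[OF F] po_mult[OF F] po_pcompose[OF F] X1F X2F rs(1,2))
    have pX2: "poly X2 z = z^2" unfolding X2_def by (simp add: power2_eq_square)
    have Tz: "poly T z = 0"
    proof -
      have "poly T z = z * poly s (z^2) - poly r (z^2)"
        unfolding T_def by (simp add: poly_pcompose pX2)
      also have "\<dots> = 0" using rs(3,4) by (simp add: field_simps)
      finally show ?thesis .
    qed
    have "p dvd T" by (rule minpoly_dvd[OF F mp TF Tz])
    then obtain h where Th: "T = p * h" by (elim dvdE)
    have "pderiv T = pcompose s X2"
      unfolding T_def X2_def using c2_pderiv_pcomp[OF two]
      by (simp add: pderiv_diff pderiv_mult pderiv_pCons)
    moreover have "pderiv T = p * pderiv h" unfolding Th pderiv_mult p'0 by simp
    ultimately have "poly (pcompose s X2) z = 0" using pz by (metis poly_mult mult_zero_left)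
    then show False using rs(3) by (simp add: poly_pcompose pX2)
  qed
  then have "coprime p (pderiv p)" by (rule minpoly_coprime[OF F mp])
  then show ?thesis unfolding separable_elem_def separable_poly_def using mp by blast
qed



lemma fe_fd: assumes fin: "finite_ext L F"
  shows "R.finite_dimension F (L :: 'a::field set)"
proof -
  have F: "is_subfield F" and L: "is_subfield L" and FL: "F \<subseteq> L" using fin unfolding finite_ext_def by auto
  obtain B where B: "finite B" "B \<subseteq> L" "\<forall>x\<in>L. \<exists>c. (\<forall>b\<in>B. c b \<in> F) \<and> x = (\<Sum>b\<in>B. c b * b)"
    using fin unfolding finite_ext_def by auto
  obtain Bs where Bs: "set Bs = B" "distinct Bs" using finite_distinct_list[OF B(1)] by auto
  have KF: "subfield F (TR::'a ring)" by (rule is_subfield_subfield[OF F])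
  have "R.Span F Bs = L"
  proof
    show "R.Span F Bs \<subseteq> L" by (rule span_in_subfield[OF L FL _ KF]) (use Bs B in auto)
    show "L \<subseteq> R.Span F Bs"
    proof
      fix x assume "x \<in> L"
      then obtain c where c: "\<forall>b\<in>B. c b \<in> F" "x = (\<Sum>b\<in>B. c b * b)" using B(3) by auto
      have "x = (\<Sum>j<length Bs. c (Bs!j) * Bs!j)"
        unfolding c(2) using sum.reindex_bij_betw[OF bij_betw_nth[OF Bs(2) refl Bs(1)[symmetric]], of "\<lambda>b. c b * b"]
        by simp
      moreover have "\<forall>j<length Bs. c (Bs!j) \<in> F" using c(1) Bs(1) by auto
      ultimately show "x \<in> R.Span F Bs" unfolding Span_sum[OF KF]
        by (intro exI[of _ "\<lambda>j. c (Bs!j)"]) simp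
    qed
  qed
  then show ?thesis using R.Span_finite_dimension[OF KF, of Bs] by simp
qed

lemma part1:
  assumes two: "(2::'a::field) = 0" and F: "is_subfield F" and L: "is_subfield L" and FL: "F \<subseteq> L"
    and fd: "R.finite_dimension F L" and coeffs: "\<forall>i<n. a i \<in> F" and cF: "c \<in> F"
    and sepL: "separable_ext L F" and cD: "c \<in> D_ts L n a"
  shows "c \<in> D_ts F n (a :: nat \<Rightarrow> 'a)"
proof -
  have KF: "subfield F (TR::'a ring)" by (rule is_subfield_subfield[OF F])
  have Lsq: "L \<subseteq> sqspan F L"
    using sep_in_sqspan[OF two F L FL] sepL unfolding separable_ext_def by blast
  obtain d where d: "R.dimension d F L" using fd by auto
  have i1: "R.independent F [1]"
  proof (rule R.li_Cons)
    show "1 \<notin> R.Span F []" by simp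
  qed auto
  have s1: "set [1] \<subseteq> L" using sf_1[OF L] by auto
  obtain Vs where Vs: "length (Vs @ [1]) = d" "R.independent F (Vs @ [1])" "R.Span F (Vs @ [1]) = L"
    using R.complete_base[OF KF d i1 s1] by auto
  define Us where "Us = Vs @ [1]"
  define Ws where "Ws = map (\<lambda>u. u^2) Us"
  define lv where "lv = length Vs"
  have lW: "length Ws = Suc lv" "length Us = Suc lv" unfolding Ws_def Us_def lv_def by simp_all
  have UsL: "set Us \<subseteq> L" using Vs(3) Sp_base[OF KF, of _ Us] unfolding Us_def by blast
  have WsL: "set Ws \<subseteq> L" unfolding Ws_def using UsL sf_power[OF L] by auto
  have UW: "\<forall>u\<in>set Us. u^2 \<in> R.Span F Ws" using Sp_base[OF KF] unfolding Ws_def by auto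
  have "L \<subseteq> R.Span F Ws"
    using sq_span_incl[OF two F subset_refl _ UW] Lsq Vs(3) unfolding Us_def by blast
  moreover have "R.Span F Ws \<subseteq> L" by (rule span_in_subfield[OF L FL WsL KF])
  ultimately have spW: "R.Span F Ws = L" by blast
  have indW: "R.independent F Ws"
    by (rule span_len_dim_indep[OF KF d spW]) (use Vs(1) in \<open>simp add: Ws_def Us_def\<close>)
  have W1: "Ws ! lv = 1" unfolding Ws_def Us_def lv_def by (simp add: nth_append)
  have UWn: "(Us!j)^2 = Ws!j" if "j < Suc lv" for j using that lW unfolding Ws_def by simp
  obtain x where x: "\<forall>i<n. x i \<in> L" "\<exists>i<n. x i \<noteq> 0" "c = (\<Sum>i<n. a i * (x i)^2)"
    using cD unfolding D_ts_def by auto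
  have "\<forall>i. \<exists>g. i < n \<longrightarrow> (\<forall>j<Suc lv. g j \<in> F) \<and> x i = (\<Sum>j<Suc lv. g j * Us!j)"
  proof
    fix i
    show "\<exists>g. i < n \<longrightarrow> (\<forall>j<Suc lv. g j \<in> F) \<and> x i = (\<Sum>j<Suc lv. g j * Us!j)"
    proof (cases "i < n")
      case True
      then have "x i \<in> R.Span F Us" using x(1) Vs(3) unfolding Us_def by auto
      then obtain g where g: "\<forall>j<length Us. g j \<in> F" "x i = (\<Sum>j<length Us. g j * Us!j)"
        using Span_sum[OF KF] by blast
      then show ?thesis using lW(2) by (intro exI[of _ g]) simp
    qed auto
  qed
  from choice[OF this] obtain f where f: "\<forall>i. i < n \<longrightarrow> (\<forall>j<Suc lv. f i j \<in> F) \<and> x i = (\<Sum>j<Suc lv. f i j * Us!j)"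
    by blast
  have xsq: "(x i)^2 = (\<Sum>j<Suc lv. (f i j)^2 * Ws!j)" if "i < n" for i
  proof -
    have "x i = (\<Sum>j<Suc lv. f i j * Us!j)" using f that by blast
    then have "(x i)^2 = (\<Sum>j<Suc lv. f i j * Us!j)^2" by simp
    also have "\<dots> = (\<Sum>j<Suc lv. (f i j * Us!j)^2)" by (rule c2_sq_sum[OF two])
    also have "\<dots> = (\<Sum>j<Suc lv. (f i j)^2 * Ws!j)"
      by (intro sum.cong refl) (simp add: power_mult_distrib UWn)
    finally show ?thesis .
  qed
  define G where "G j = (\<Sum>i<n. a i * (f i j)^2)" for j
  define H where "H j = (if j = lv then c else 0)" for j
  have "c = (\<Sum>i<n. a i * (\<Sum>j<Suc lv. (f i j)^2 * Ws!j))" using x(3) xsq by simp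
  also have "\<dots> = (\<Sum>i<n. \<Sum>j<Suc lv. a i * ((f i j)^2 * Ws!j))"
    by (simp add: sum_distrib_left del: sum.lessThan_Suc)
  also have "\<dots> = (\<Sum>j<Suc lv. \<Sum>i<n. a i * ((f i j)^2 * Ws!j))" by (rule sum.swap)
  also have "\<dots> = (\<Sum>j<Suc lv. G j * Ws!j)"
    unfolding G_def by (simp add: sum_distrib_right mult.assoc del: sum.lessThan_Suc)
  finally have cG: "c = (\<Sum>j<Suc lv. G j * Ws!j)" .
  have cH: "c = (\<Sum>j<Suc lv. H j * Ws!j)" unfolding H_def using W1 by (simp add: if_distrib sum.delta)
  have GF: "\<forall>j<length Ws. G j \<in> F" unfolding G_def lW(1) using coeffs f
    by (auto simp del: sum.lessThan_Suc intro!: sf_sum[OF F] sf_mult[OF F] sf_power[OF F])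
  have HF: "\<forall>j<length Ws. H j \<in> F" unfolding H_def using cF sf_0[OF F] by auto
  have "(\<Sum>j<length Ws. G j * Ws!j) = (\<Sum>j<length Ws. H j * Ws!j)"
    unfolding lW(1) using trans[OF cG[symmetric] cH] .
  from uniq_coeffs[OF KF indW GF HF this] have GH: "\<forall>j<Suc lv. G j = H j"
    unfolding lW(1) .
  show ?thesis
  proof (cases "c = 0")
    case False
    define y where "y i = f i lv" for i
    have "G lv = c" using GH H_def by simp
    then have cy: "c = (\<Sum>i<n. a i * (y i)^2)" unfolding G_def y_def by simp
    have "\<exists>i<n. y i \<noteq> 0"
    proof (rule ccontr)
      assume "\<not> (\<exists>i<n. y i \<noteq> 0)"
      then have "(\<Sum>i<n. a i * (y i)^2) = 0" by simp
      then show False using cy False by simp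
    qed
    moreover have "\<forall>i<n. y i \<in> F" using f unfolding y_def by auto
    ultimately show ?thesis unfolding D_ts_def using cy by blast
  next
    case True
    obtain i0 where i0: "i0 < n" "x i0 \<noteq> 0" using x(2) by auto
    have "\<exists>j<Suc lv. f i0 j \<noteq> 0"
    proof (rule ccontr)
      assume "\<not> (\<exists>j<Suc lv. f i0 j \<noteq> 0)"
      then have "x i0 = 0" using f i0(1) by simp
      then show False using i0 by simp
    qed
    then obtain j where j: "j < Suc lv" "f i0 j \<noteq> 0" by auto
    define y where "y i = f i j" for i
    have "G j = 0" using GH j(1) True H_def by simp
    then have cy: "c = (\<Sum>i<n. a i * (y i)^2)" unfolding G_def y_def using True by simp
    moreover have "\<forall>i<n. y i \<in> F" using f j(1) unfolding y_def by auto
    moreover have "\<exists>i<n. y i \<noteq> 0" using i0 j unfolding y_def by auto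
    ultimately show ?thesis unfolding D_ts_def by blast
  qed
qed



theorem proposition4p1:
  fixes F L :: "'a::field set" and n :: nat and a :: "nat \<Rightarrow> 'a"
    and c lam :: 'a
  assumes char2: "CHAR('a) = 2"
    and coeffs: "\<forall>i<n. a i \<in> F"
    and nonzero: "\<exists>i<n. a i \<noteq> 0"
    and fin: "finite_ext L F"
    and cF: "c \<in> F"
    and hlam: "lam \<in> L - F"
  shows "(separable_ext L F \<and> c \<in> D_ts L n a \<longrightarrow> c \<in> D_ts F n a)
    \<and> (c \<noteq> 0 \<and> c * lam \<in> D_ts (adjoin F lam) n a \<longrightarrow> separable_ext (adjoin F lam) F)
    \<and> (c \<noteq> 0 \<and> c * lam \<in> D_ts L n a \<longrightarrow>
         separable_ext (adjoin F lam) F \<or> \<not> separable_ext L (adjoin F lam))"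
proof -
  have two: "(2::'a) = 0" using of_nat_CHAR[where 'a='a] char2 by simp
  have F: "is_subfield F" and L: "is_subfield L" and FL: "F \<subseteq> L"
    using fin unfolding finite_ext_def by auto
  have fd: "R.finite_dimension F L" by (rule fe_fd[OF fin])
  define K where "K = adjoin F lam"
  have K: "is_subfield K" unfolding K_def by (rule adjoin_subfield)
  have FK: "F \<subseteq> K" unfolding K_def by (rule adjoin_F)
  have lK: "lam \<in> K" unfolding K_def by (rule adjoin_x)
  have lL: "lam \<in> L" using hlam by auto
  have KL: "K \<subseteq> L" unfolding K_def by (rule adjoin_min[OF L FL lL])
  have icF: "inverse c \<in> F" using cF F by (simp add: sf_inverse)
  have lam_in: "lam \<in> sqspan F E" if "c \<noteq> 0" "c * lam \<in> sqspan F E" for E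
  proof -
    have "inverse c * (c * lam) \<in> sqspan F E" by (rule sqspan_scale[OF F icF that(2)])
    moreover have "inverse c * (c * lam) = lam" using that(1) by (simp add: mult.assoc[symmetric])
    ultimately show ?thesis by simp
  qed
  have P1: "separable_ext L F \<and> c \<in> D_ts L n a \<longrightarrow> c \<in> D_ts F n a"
    using part1[OF two F L FL fd coeffs cF] by blast
  have P2: "separable_ext K F" if c0: "c \<noteq> 0" and cl: "c * lam \<in> D_ts K n a"
  proof -
    have "lam \<in> sqspan F K" using lam_in[OF c0] D_ts_sqspan[OF coeffs] cl by blast
    then have Ksq: "K \<subseteq> sqspan F K" unfolding K_def
      using adjoin_min[OF sqspan_subfield[OF F K FK] sqspan_F[OF K]] by (simp add: K_def)
    show ?thesis unfolding separable_ext_def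
      using sep_main[OF two F K L FK KL fd Ksq] by blast
  qed
  have P3: "separable_ext K F" if c0: "c \<noteq> 0" and cl: "c * lam \<in> D_ts L n a"
    and sLK: "separable_ext L K"
  proof -
    define S where "S = sqspan F L"
    have S: "is_subfield S" unfolding S_def by (rule sqspan_subfield[OF F L FL])
    have FS: "F \<subseteq> S" unfolding S_def by (rule sqspan_F[OF L])
    have "lam \<in> S" unfolding S_def using lam_in[OF c0] D_ts_sqspan[OF coeffs] cl by blast
    then have KS: "K \<subseteq> S" unfolding K_def by (rule adjoin_min[OF S FS])
    have "L \<subseteq> sqspan K L"
      using sep_in_sqspan[OF two K L KL] sLK unfolding separable_ext_def by blast
    also have "\<dots> \<subseteq> sqspan S L" by (rule sqspan_mono[OF KS])
    also have "\<dots> \<subseteq> S"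
    proof (rule sqspan_in_field[OF S subset_refl])
      show "\<forall>u\<in>L. u^2 \<in> S" unfolding S_def using sqspan_sq[OF sf_1[OF F]] by fastforce
    qed
    finally have Lsq: "L \<subseteq> sqspan F L" unfolding S_def .
    have "\<forall>z\<in>L. separable_elem F z"
      using sep_main[OF two F L L FL subset_refl fd Lsq] by blast
    then show ?thesis unfolding separable_ext_def using KL by blast
  qed
  show ?thesis using P1 P2 P3 unfolding K_def by blast
qed

end
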